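(* Let $q$ be a prime power and $b,k,t$ positive integers with $k>t$. Then \[ r_b^{wt_b}(k,t)\ge\frac{5q^b(t-b+2)(t-b+1)}{3(q^b-1)(t-b+3)}. \]
   Context: For $\boldsymbol{z}=(z_0,\ldots,z_{n-1}),\boldsymbol{w}\in\mathbb{F}_q^n$, $d_b(\boldsymbol{z},\boldsymbol{w})$ is the number of $i\in\{0,\ldots,n-1\}$ with $(z_i,\ldots,z_{i+b-1})\ne(w_i,\ldots,w_{i+b-1})$ (indices mod $n$), and $wt_b(\boldsymbol{x})=d_b(\boldsymbol{x},\boldsymbol{0})$ is the $b$-symbol weight function on $\mathbb{F}_q^k$. A systematic encoding $\mathrm{Enc}(\boldsymbol{x})=(\boldsymbol{x},p(\boldsymbol{x}))\in\mathbb{F}_q^{k+r}$ is a function-correcting $b$-symbol code for $f$ if $d_b(\mathrm{Enc}(\boldsymbol{x}_1),\mathrm{Enc}(\boldsymbol{x}_2))\ge 2t+1$ whenever $f(\boldsymbol{x}_1)\ne f(\boldsymbol{x}_2)$; $r_b^f(k,t)$ is the smallest $r$ for which one exists. *)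

theory Defs
  imports Complex_Main
begin

text \<open>Vectors in F_q^n are lists of length n over a finite field type 'a.
  The b-symbol read of z at position i (indices mod n = length z).\<close>

definition bsym :: "nat \<Rightarrow> 'a list \<Rightarrow> nat \<Rightarrow> 'a list" where
  "bsym b z i = map (\<lambda>j. z ! ((i + j) mod length z)) [0..<b]"

definition db :: "nat \<Rightarrow> 'a list \<Rightarrow> 'a list \<Rightarrow> nat" where
  "db b z w = card {i. i < length z \<and> bsym b z i \<noteq> bsym b w i}"

definition wtb :: "nat \<Rightarrow> 'a::zero list \<Rightarrow> nat" where
  "wtb b x = db b x (replicate (length x) 0)"

text \<open>Systematic encoding Enc(x) = (x, p(x)) with p : F_q^k \<rightarrow> F_q^r is a
  function-correcting b-symbol code for f correcting t errors.\<close>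
definition fc_bsym_code ::
  "nat \<Rightarrow> nat \<Rightarrow> ('a list \<Rightarrow> 'c) \<Rightarrow> nat \<Rightarrow> nat \<Rightarrow> ('a list \<Rightarrow> 'a list) \<Rightarrow> bool" where
  "fc_bsym_code b t f k r p \<longleftrightarrow>
     (\<forall>x. length x = k \<longrightarrow> length (p x) = r) \<and>
     (\<forall>x1 x2. length x1 = k \<longrightarrow> length x2 = k \<longrightarrow> f x1 \<noteq> f x2 \<longrightarrow>
        2 * t + 1 \<le> db b (x1 @ p x1) (x2 @ p x2))"

definition rb :: "nat \<Rightarrow> ('a list \<Rightarrow> 'c) \<Rightarrow> nat \<Rightarrow> nat \<Rightarrow> nat" where
  "rb b f k t = (LEAST r. \<exists>p. fc_bsym_code b t f k r p)"

end

theory Submission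
  imports Defs
begin

lemma bsym_len[simp]: "length (bsym b z i) = b"
  by (simp add: bsym_def)

lemma bsym_nth: "j < b \<Longrightarrow> bsym b z i ! j = z ! ((i + j) mod length z)"
  by (simp add: bsym_def)

lemma sum_ind_card: "(\<Sum>s\<in>S. if P s then 1 else 0 :: real) = real (card {s\<in>S. P s})" if "finite S"
  using that by (simp add: sum.If_cases Int_def)

lemma db_sum: "real (db b z w) = (\<Sum>s<length z. if bsym b z s \<noteq> bsym b w s then 1 else 0)"
proof -
  have "{i. i < length z \<and> bsym b z i \<noteq> bsym b w i} = {s\<in>{..<length z}. bsym b z s \<noteq> bsym b w s}" by auto
  then show ?thesis unfolding db_def by (simp add: sum_ind_card)
qed

lemma hamming_le_db:
  assumes "length z = length w" "0 < b"
  shows "card {i. i < length z \<and> z ! i \<noteq> w ! i} \<le> db b z w"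
  unfolding db_def
proof (rule card_mono)
  show "finite {i. i < length z \<and> bsym b z i \<noteq> bsym b w i}" by simp
  show "{i. i < length z \<and> z ! i \<noteq> w ! i} \<subseteq> {i. i < length z \<and> bsym b z i \<noteq> bsym b w i}"
  proof clarify
    fix i assume i: "i < length z" "z ! i \<noteq> w ! i" "bsym b z i = bsym b w i"
    have "bsym b z i ! 0 = bsym b w i ! 0" using i by simp
    then have "z ! ((i+0) mod length z) = w ! ((i+0) mod length w)" using assms by (simp only: bsym_nth)
    then show False using i assms by simp
  qed
qed

lemma sum_abs_diff: "(\<Sum>i<M. \<Sum>j<M. \<bar>real i - real j\<bar>) = real (M+1) * real M * (real M - 1) / 3"
proof (induction M)
  case 0 then show ?case by simp
next
  case (Suc M)
  have a: "(\<Sum>i<M. \<bar>real i - real M\<bar>) = real M * (real M + 1) / 2"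
  proof -
    have "(\<Sum>i<M. \<bar>real i - real M\<bar>) = (\<Sum>i<M. real M - real i)" by (rule sum.cong) auto
    also have "\<dots> = real M * real M - (\<Sum>i<M. real i)" by (simp add: sum_subtractf)
    also have "(\<Sum>i<M. real i) = real M * (real M - 1) / 2"
    proof (induction M)
      case 0 then show ?case by simp
    next
      case (Suc M) then show ?case by (simp add: algebra_simps add_divide_distrib)
    qed
    finally show ?thesis by (simp add: field_simps)
  qed
  have b: "(\<Sum>j<M. \<bar>real M - real j\<bar>) = real M * (real M + 1) / 2"
    using a by (simp add: abs_minus_commute)
  have "(\<Sum>i<Suc M. \<Sum>j<Suc M. \<bar>real i - real j\<bar>) = (\<Sum>i<M. \<Sum>j<M. \<bar>real i - real j\<bar>) + (\<Sum>i<M. \<bar>real i - real M\<bar>) + (\<Sum>j<M. \<bar>real M - real j\<bar>)"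
    by (simp add: sum.distrib)
  then show ?case using Suc a b by (simp add: field_simps)
qed

lemma sum_neq: "(\<Sum>i<M. \<Sum>j<M. if i = j then 0 else c) = (real M * real M - real M) * (c::real)"
proof -
  have "\<And>i. i < M \<Longrightarrow> (\<Sum>j<M. if i = j then 0 else c) = (real M - 1) * c"
  proof -
    fix i assume "i < M"
    have "(\<Sum>j<M. if i = j then 0 else c) = (if i = i then 0 else c) + (\<Sum>j\<in>{..<M} - {i}. if i = j then 0 else c)"
      using \<open>i < M\<close> by (subst sum.remove[of _ i]) auto
    also have "\<dots> = (\<Sum>j\<in>{..<M} - {i}. c)" by (auto intro!: sum.cong)
    finally show "(\<Sum>j<M. if i = j then 0 else c) = (real M - 1) * c" using \<open>i < M\<close> by (simp add: of_nat_diff)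
  qed
  then have "(\<Sum>i<M. \<Sum>j<M. if i = j then 0 else c) = (\<Sum>i<M. (real M - 1) * c)" by (intro sum.cong) auto
  then show ?thesis by (simp add: algebra_simps)
qed

lemma pairs_bound:
  fixes g :: "nat \<Rightarrow> 'b"
  assumes A: "finite A" "card A = Q" "0 < Q" and gA: "\<forall>i<M. g i \<in> A"
  shows "(\<Sum>i<M. \<Sum>j<M. if g i \<noteq> g j then 1 else 0 :: real) \<le> real M ^ 2 * (1 - 1 / real Q)"
proof -
  define c where "c v = real (card {i\<in>{..<M}. g i = v})" for v
  have inner: "(\<Sum>j<M. if g i = g j then 1 else 0 :: real) = c (g i)" for i
  proof -
    have "{j\<in>{..<M}. g i = g j} = {j\<in>{..<M}. g j = g i}" by auto
    then show ?thesis unfolding c_def by (subst sum_ind_card) auto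
  qed
  have img: "g ` {..<M} \<subseteq> A" using gA by auto
  have grp: "(\<Sum>i<M. h i) = (\<Sum>v\<in>A. \<Sum>i\<in>{i\<in>{..<M}. g i = v}. h i)" for h :: "nat \<Rightarrow> real"
    using sum.group[OF finite_lessThan A(1) img, of h] by simp
  have eq: "(\<Sum>i<M. \<Sum>j<M. if g i = g j then 1 else 0 :: real) = (\<Sum>v\<in>A. c v * c v)"
  proof -
    have "(\<Sum>i<M. \<Sum>j<M. if g i = g j then 1 else 0 :: real) = (\<Sum>i<M. c (g i))" using inner by simp
    also have "\<dots> = (\<Sum>v\<in>A. \<Sum>i\<in>{i\<in>{..<M}. g i = v}. c (g i))" by (rule grp)
    also have "\<dots> = (\<Sum>v\<in>A. c v * c v)"
      by (rule sum.cong[OF refl]) (simp add: c_def)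
    finally show ?thesis .
  qed
  have sc: "(\<Sum>v\<in>A. c v) = real M"
  proof -
    have "real M = (\<Sum>i<M. 1)" by simp
    also have "\<dots> = (\<Sum>v\<in>A. \<Sum>i\<in>{i\<in>{..<M}. g i = v}. 1)" by (rule grp)
    also have "\<dots> = (\<Sum>v\<in>A. c v)" by (simp add: c_def)
    finally show ?thesis by simp
  qed
  have "0 \<le> (\<Sum>v\<in>A. (c v - real M / real Q)^2)" by (simp add: sum_nonneg)
  also have "\<dots> = (\<Sum>v\<in>A. c v * c v) - 2 * (real M / real Q) * (\<Sum>v\<in>A. c v) + real Q * (real M / real Q)^2"
    by (simp add: power2_eq_square algebra_simps sum.distrib sum_subtractf sum_distrib_left[symmetric] sum_distrib_right[symmetric] sum_divide_distrib[symmetric] A)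
  finally have "real M ^ 2 / real Q \<le> (\<Sum>v\<in>A. c v * c v)"
    using A(3) sc by (simp add: power2_eq_square field_simps)
  moreover have "(\<Sum>i<M. \<Sum>j<M. if g i \<noteq> g j then 1 else 0 :: real) = real M ^ 2 - (\<Sum>i<M. \<Sum>j<M. if g i = g j then 1 else 0 :: real)"
  proof -
    have "(\<Sum>i<M. \<Sum>j<M. if g i \<noteq> g j then 1 else 0 :: real) = (\<Sum>i<M. \<Sum>j<M. 1 - (if g i = g j then 1 else 0 :: real))"
      by (intro sum.cong) auto
    then show ?thesis by (simp add: sum_subtractf power2_eq_square)
  qed
  ultimately show ?thesis using eq by (simp add: algebra_simps)
qed

lemma arith_final:
  fixes R T B Q :: real
  assumes Q1: "Q > 1" and B1: "B \<ge> 1" and TB: "T \<ge> B"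
    and h1: "(2*T+1)*((T-B+3)*(T-B+3) - (T-B+3)) \<le> ((T-B+3)+1)*(T-B+3)*((T-B+3)-1)/3 + ((T-B+3)*(T-B+3) - (T-B+3))*(B-1) + (R+B-1)*((T-B+3)^2*(1-1/Q))"
    and h2: "2*T+1 \<le> R + 2*B - 1"
  shows "R \<ge> 5*Q*(T-B+2)*(T-B+1)/(3*(Q-1)*(T-B+3))"
proof -
  define m where "m = T - B + 1"
  have m1: "m \<ge> 1" using TB m_def by simp
  have T: "T = m + B - 1" using m_def by simp
  have TB3: "T - B + 3 = m + 2" using m_def by simp
  have T2: "2*T+1 = 2*m+2*B-1" using m_def by simp
  have h1m: "(2*m+2*B-1)*((m+2)*(m+2) - (m+2)) \<le> ((m+2)+1)*(m+2)*((m+2)-1)/3 + ((m+2)*(m+2) - (m+2))*(B-1) + (R+B-1)*((m+2)^2*(1-1/Q))"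
    using h1 unfolding TB3 T2 .
  have e1: "3*Q*((2*m+2*B-1)*((m+2)*(m+2) - (m+2))) = (m+2)*(3*Q*(m+1)*(2*m+2*B-1))"
    by (simp add: algebra_simps power2_eq_square)
  have e2: "3*Q*(((m+2)+1)*(m+2)*((m+2)-1)/3 + ((m+2)*(m+2) - (m+2))*(B-1) + (R+B-1)*((m+2)^2*(1-1/Q)))
      = (m+2)*(Q*(m+3)*(m+1) + 3*Q*(m+1)*(B-1) + 3*(R+B-1)*(m+2)*(Q-1))"
    using Q1 by (simp add: algebra_simps power2_eq_square field_simps)
  have "3*Q*((2*m+2*B-1)*((m+2)*(m+2) - (m+2))) \<le> 3*Q*(((m+2)+1)*(m+2)*((m+2)-1)/3 + ((m+2)*(m+2) - (m+2))*(B-1) + (R+B-1)*((m+2)^2*(1-1/Q)))"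
    using h1m Q1 by (intro mult_left_mono) auto
  then have "(m+2)*(3*Q*(m+1)*(2*m+2*B-1)) \<le> (m+2)*(Q*(m+3)*(m+1) + 3*Q*(m+1)*(B-1) + 3*(R+B-1)*(m+2)*(Q-1))"
    using e1 e2 by simp
  then have h: "3*Q*(m+1)*(2*m+2*B-1) \<le> Q*(m+3)*(m+1) + 3*Q*(m+1)*(B-1) + 3*(R+B-1)*(m+2)*(Q-1)"
    using m1 by (simp add: mult_le_cancel_left_pos)
  have R2m: "R \<ge> 2*m" using h2 T by simp
  have den: "3*(Q-1)*(m+2) > 0" using Q1 m1 by simp
  have key: "5*Q*(m+1)*m \<le> R*(3*(Q-1)*(m+2))"
  proof (cases "Q*(m+1) \<ge> (Q-1)*(m+2)")
    case True
    have "(B-1)*((Q-1)*(m+2)) \<le> (B-1)*(Q*(m+1))" using True B1 by (intro mult_left_mono) auto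
    then show ?thesis using h by (simp add: algebra_simps)
  next
    case False
    have "R*(Q*(m+1)) \<le> R*((Q-1)*(m+2))" using False R2m m1 by (intro mult_left_mono) auto
    moreover have "2*m*(Q*(m+1)) \<le> R*(Q*(m+1))" using R2m Q1 m1 by (intro mult_right_mono) auto
    moreover have "0 \<le> Q*(m+1)*m" using Q1 m1 by simp
    ultimately show ?thesis by (simp add: algebra_simps)
  qed
  have "5*Q*(T-B+2)*(T-B+1)/(3*(Q-1)*(T-B+3)) = 5*Q*(m+1)*m/(3*(Q-1)*(m+2))"
    unfolding T by (simp add: algebra_simps)
  also have "\<dots> \<le> R" using key den by (simp add: pos_divide_le_eq)
  finally show ?thesis .
qed

definition xv :: "nat \<Rightarrow> nat \<Rightarrow> 'a::zero_neq_one list" where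
  "xv k i = map (\<lambda>j. if j < i then 1 else 0) [0..<k]"

lemma xv_len[simp]: "length (xv k i) = k" by (simp add: xv_def)

lemma xv_nth: "j < k \<Longrightarrow> xv k i ! j = (if j < i then 1 else 0)" by (simp add: xv_def)

lemma bsym_xv_ne:
  assumes "0 < k"
  shows "bsym b (xv k i :: 'a::zero_neq_one list) s \<noteq> bsym b (replicate k 0) s \<longleftrightarrow> (\<exists>l<b. (s+l) mod k < i)"
proof -
  have "bsym b (xv k i :: 'a list) s = bsym b (replicate k 0) s \<longleftrightarrow> (\<forall>l<b. \<not> (s+l) mod k < i)"
    using assms by (simp add: list_eq_iff_nth_eq bsym_nth xv_nth) blast
  then show ?thesis by blast
qed

lemma wt_mono:
  assumes "i < j" "j + b \<le> k + 1" "0 < b"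
  shows "wtb b (xv k i :: 'a::zero_neq_one list) < wtb b (xv k j :: 'a list)"
proof -
  have k0: "0 < k" using assms by simp
  define S where "S i = {s. s < k \<and> (\<exists>l<b. (s+l) mod k < i)}" for i
  have w: "wtb b (xv k i' :: 'a list) = card (S i')" for i'
    unfolding wtb_def db_def S_def using bsym_xv_ne[OF k0, where 'a='a] by simp
  have sub: "S i \<subseteq> S j" unfolding S_def using assms by auto
  have "j - 1 \<in> S j" unfolding S_def using assms by (auto intro!: exI[of _ 0])
  moreover have "j - 1 \<notin> S i"
  proof
    assume "j - 1 \<in> S i"
    then obtain l where l: "l < b" "(j - 1 + l) mod k < i" unfolding S_def by auto
    have "j - 1 + l < k" using assms l by linarith
    then show False using l assms by simp
  qed
  ultimately have "S i \<subset> S j" using sub by blast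
  then have "card (S i) < card (S j)" by (intro psubset_card_mono) (auto simp: S_def)
  then show ?thesis using w by simp
qed

lemma main_lower:
  fixes p :: "'a::{finite,field} list \<Rightarrow> 'a list"
  assumes code: "fc_bsym_code b t (wtb b) k r p" and b0: "0 < b" and bt: "b \<le> t" and tk: "t < k"
  shows "real r \<ge> 5 * real (card (UNIV :: 'a set)) ^ b * (real t - real b + 2) * (real t - real b + 1)
       / (3 * (real (card (UNIV :: 'a set)) ^ b - 1) * (real t - real b + 3))"
proof -
  define q where "q = card (UNIV :: 'a set)"
  define Q where "Q = q ^ b"
  have q2: "q \<ge> 2"
  proof -
    have "{0, 1} \<subseteq> (UNIV :: 'a set)" by simp
    then have "card {0, 1::'a} \<le> q" unfolding q_def by (intro card_mono) auto
    then show ?thesis by simp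
  qed
  have Q2: "Q \<ge> 2"
  proof -
    have "q ^ 1 \<le> q ^ b" using q2 b0 by (intro power_increasing) auto
    then show ?thesis using q2 Q_def by simp
  qed
  define M where "M = t - b + 3"
  define X where "X i = (xv k i :: 'a list) @ p (xv k i)" for i
  have plen: "length (p (xv k i :: 'a list)) = r" for i
    using code unfolding fc_bsym_code_def by simp
  have lenX: "length (X i) = k + r" for i unfolding X_def using plen by simp
  have wne: "wtb b (xv k i :: 'a list) \<noteq> wtb b (xv k j :: 'a list)" if "i < M" "j < M" "i \<noteq> j" for i j
  proof (cases "i < j")
    case True
    have "j + b \<le> k + 1" using that bt tk M_def by linarith
    then show ?thesis using wt_mono[of i j b k, where 'a='a] True b0 by simp
  next
    case False then have "j < i" using that by simp
    have "i + b \<le> k + 1" using that bt tk M_def by linarith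
    then show ?thesis using wt_mono[of j i b k, where 'a='a] \<open>j < i\<close> b0 by simp
  qed
  have wdiff: "2*t+1 \<le> db b (X i) (X j)" if "i < M" "j < M" "i \<noteq> j" for i j
    using code wne[OF that] unfolding fc_bsym_code_def X_def by simp
  define ind where "ind i j s = (if bsym b (X i) s \<noteq> bsym b (X j) s then 1 else 0 :: real)" for i j s
  define P where "P = {k+1-b..<k+r}"
  have cardP: "card P = r + b - 1" unfolding P_def using bt tk by simp
  have dbs: "real (db b (X i) (X j)) = (\<Sum>s<k+1-b. ind i j s) + (\<Sum>s\<in>P. ind i j s)" for i j
  proof -
    have "real (db b (X i) (X j)) = (\<Sum>s\<in>{0..<k+r}. ind i j s)"
      unfolding db_sum lenX ind_def by (simp add: atLeast0LessThan)
    also have "\<dots> = (\<Sum>s\<in>{0..<k+1-b}. ind i j s) + (\<Sum>s\<in>P. ind i j s)"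
      unfolding P_def using bt tk b0 by (subst sum.atLeastLessThan_concat[symmetric, of 0 "k+1-b"]) auto
    finally show ?thesis by (simp add: atLeast0LessThan)
  qed
  have xpart: "(\<Sum>s<k+1-b. ind i j s) \<le> \<bar>real i - real j\<bar> + (if i = j then 0 else real b - 1)"
    if "i < M" "j < M" for i j
  proof (cases "i = j")
    case True then show ?thesis by (simp add: ind_def)
  next
    case False
    define lo where "lo = min i j"
    define hi where "hi = max i j"
    have lohi: "lo < hi" using False lo_def hi_def by simp
    have "(\<Sum>s<k+1-b. ind i j s) = (\<Sum>s<k+1-b. if ind i j s \<noteq> 0 then 1 else 0)"
      by (intro sum.cong) (auto simp: ind_def)
    also have "\<dots> = real (card {s\<in>{..<k+1-b}. ind i j s \<noteq> 0})"
      by (simp add: sum_ind_card)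
    also have "card {s\<in>{..<k+1-b}. ind i j s \<noteq> 0} \<le> card {lo+1-b..<hi}"
    proof (rule card_mono)
      show "finite {lo+1-b..<hi}" by simp
      show "{s\<in>{..<k+1-b}. ind i j s \<noteq> 0} \<subseteq> {lo+1-b..<hi}"
      proof clarify
        fix s assume s: "s < k+1-b" "ind i j s \<noteq> 0"
        then have ne: "bsym b (X i) s \<noteq> bsym b (X j) s" by (simp add: ind_def split: if_splits)
        have "\<exists>l<b. X i ! ((s+l) mod (k+r)) \<noteq> X j ! ((s+l) mod (k+r))"
        proof (rule ccontr)
          assume "\<not> ?thesis"
          then have "bsym b (X i) s = bsym b (X j) s"
            by (simp add: list_eq_iff_nth_eq bsym_nth lenX)
          then show False using ne by simp
        qed
        then obtain l where l: "l < b" "X i ! ((s+l) mod (k+r)) \<noteq> X j ! ((s+l) mod (k+r))" by blast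
        have slk: "s + l < k" using s l b0 by linarith
        then have "(s+l) mod (k+r) = s+l" by simp
        then have "xv k i ! (s+l) \<noteq> (xv k j ! (s+l) :: 'a)" using l slk unfolding X_def by (simp add: nth_append)
        then have "(s + l < i) \<noteq> (s + l < j)" using slk by (simp add: xv_nth split: if_splits)
        then have "lo \<le> s + l" "s + l < hi" unfolding lo_def hi_def by auto
        then show "s \<in> {lo+1-b..<hi}" using l by auto
      qed
    qed
    then have "real (card {s\<in>{..<k+1-b}. ind i j s \<noteq> 0}) \<le> real (card {lo+1-b..<hi})" by simp
    also have "real (card {lo+1-b..<hi}) \<le> \<bar>real i - real j\<bar> + (real b - 1)"
      using lohi b0 unfolding lo_def hi_def by (auto simp: of_nat_diff)
    finally show ?thesis using False by simp
  qed
  have A: "finite {xs::'a list. set xs \<subseteq> UNIV \<and> length xs = b}" "card {xs::'a list. set xs \<subseteq> UNIV \<and> length xs = b} = Q"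
    unfolding Q_def q_def using finite_lists_length_eq[of "UNIV::'a set" b] card_lists_length_eq[of "UNIV::'a set" b] by simp_all
  have ppart: "(\<Sum>i<M. \<Sum>j<M. ind i j s) \<le> real M ^ 2 * (1 - 1 / real Q)" for s
    unfolding ind_def
    by (rule pairs_bound[OF A(1) A(2)]) (use Q2 in auto)
  have tri: "2*t+1 \<le> real r + 2 * real b - 1"
  proof -
    have "real (2*t+1) \<le> real (db b (X 0) (X 1))" using wdiff[of 0 1] M_def by simp
    also have "\<dots> \<le> (\<bar>real 0 - real 1\<bar> + (real b - 1)) + (\<Sum>s\<in>P. 1)"
    proof -
      have x1: "(\<Sum>s<k+1-b. ind 0 1 s) \<le> \<bar>real 0 - real 1\<bar> + (if (0::nat) = 1 then 0 else real b - 1)"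
        by (rule xpart) (auto simp: M_def)
      have p1: "(\<Sum>s\<in>P. ind 0 1 s) \<le> (\<Sum>s\<in>P. 1)" by (rule sum_mono) (simp add: ind_def)
      show ?thesis unfolding dbs using x1 p1 by simp
    qed
    also have "\<dots> = real r + 2 * real b - 1" using cardP b0 by (simp add: of_nat_diff)
    finally show ?thesis by simp
  qed
  have big: "real (2*t+1) * (real M * real M - real M) \<le>
     real (M+1) * real M * (real M - 1) / 3 + (real M * real M - real M) * (real b - 1)
     + real (r + b - 1) * (real M ^ 2 * (1 - 1 / real Q))"
  proof -
    have "real (2*t+1) * (real M * real M - real M) = (\<Sum>i<M. \<Sum>j<M. if i = j then 0 else real (2*t+1))"
      by (simp add: sum_neq)
    also have "\<dots> \<le> (\<Sum>i<M. \<Sum>j<M. real (db b (X i) (X j)))"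
    proof (intro sum_mono)
      fix i j assume "i \<in> {..<M}" "j \<in> {..<M}"
      then show "(if i = j then 0 else real (2*t+1)) \<le> real (db b (X i) (X j))"
        using wdiff[of i j] by (auto simp del: of_nat_add of_nat_mult)
    qed
    also have "\<dots> = (\<Sum>i<M. \<Sum>j<M. \<Sum>s<k+1-b. ind i j s) + (\<Sum>i<M. \<Sum>j<M. \<Sum>s\<in>P. ind i j s)"
      unfolding dbs by (simp add: sum.distrib)
    also have "(\<Sum>i<M. \<Sum>j<M. \<Sum>s<k+1-b. ind i j s) \<le> (\<Sum>i<M. \<Sum>j<M. \<bar>real i - real j\<bar> + (if i = j then 0 else real b - 1))"
      by (intro sum_mono xpart) auto
    also have "\<dots> = real (M+1) * real M * (real M - 1) / 3 + (real M * real M - real M) * (real b - 1)"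
      by (simp add: sum.distrib sum_abs_diff sum_neq)
    also have "(\<Sum>i<M. \<Sum>j<M. \<Sum>s\<in>P. ind i j s) = (\<Sum>i<M. \<Sum>s\<in>P. \<Sum>j<M. ind i j s)"
      by (rule sum.cong[OF refl], rule sum.swap)
    also have "\<dots> = (\<Sum>s\<in>P. \<Sum>i<M. \<Sum>j<M. ind i j s)" by (rule sum.swap)
    also have "\<dots> \<le> (\<Sum>s\<in>P. real M ^ 2 * (1 - 1 / real Q))" by (intro sum_mono ppart)
    also have "\<dots> = real (r + b - 1) * (real M ^ 2 * (1 - 1 / real Q))" using cardP by simp
    finally show ?thesis by simp
  qed
  have RM: "real M = real t - real b + 3" unfolding M_def using bt by (simp add: of_nat_diff)
  have rb1: "real (r + b - 1) = real r + real b - 1" using b0 by (simp add: of_nat_diff)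
  have RM1: "real (M+1) = real M + 1" by simp
  have t1: "real (2*t+1) = 2 * real t + 1" by simp
  have h1: "(2*real t+1)*((real t-real b+3)*(real t-real b+3) - (real t-real b+3)) \<le> ((real t-real b+3)+1)*(real t-real b+3)*((real t-real b+3)-1)/3 + ((real t-real b+3)*(real t-real b+3) - (real t-real b+3))*(real b-1) + (real r+real b-1)*((real t-real b+3)^2*(1-1/real Q))"
    using big unfolding RM1 t1 rb1 RM .
  have "5*real Q*(real t-real b+2)*(real t-real b+1)/(3*(real Q-1)*(real t-real b+3)) \<le> real r"
    by (rule arith_final[OF _ _ _ h1]) (use Q2 b0 bt tri in auto)
  then show ?thesis unfolding Q_def q_def by simp
qed

definition pc :: "nat \<Rightarrow> nat \<Rightarrow> nat \<Rightarrow> 'a::{zero,one} list \<Rightarrow> 'a list" where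
  "pc b t k x = map (\<lambda>i. if i div (2*t+1) = wtb b x then 1 else 0) [0..<(k+1)*(2*t+1)]"

lemma wtb_le: "wtb b x \<le> length x"
proof -
  have "wtb b x \<le> card {..<length x}" unfolding wtb_def db_def by (intro card_mono) auto
  then show ?thesis by simp
qed

lemma map_upt_nth: "i < n \<Longrightarrow> map f [0..<n] ! i = f i" by simp

lemma pc_nth: "i < (k+1)*(2*t+1) \<Longrightarrow> pc b t k x ! i = (if i div (2*t+1) = wtb b x then 1 else 0)"
  unfolding pc_def by (rule map_upt_nth)

lemma divaux: "c < n \<Longrightarrow> (w*n + c) div n = (w::nat)" by simp

lemma exists_code:
  assumes b0: "0 < b"
  shows "fc_bsym_code b t (wtb b) k ((k+1)*(2*t+1)) (pc b t k :: 'a::{zero_neq_one} list \<Rightarrow> 'a list)"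
  unfolding fc_bsym_code_def
proof (intro conjI allI impI)
  fix x :: "'a list" assume "length x = k" then show "length (pc b t k x) = (k+1)*(2*t+1)" by (simp add: pc_def)
next
  fix x1 x2 :: "'a list"
  assume l1: "length x1 = k" and l2: "length x2 = k" and ne: "wtb b x1 \<noteq> wtb b x2"
  define w where "w = wtb b x1"
  define Z1 where "Z1 = x1 @ pc b t k x1"
  define Z2 where "Z2 = x2 @ pc b t k x2"
  have wk: "w \<le> k" using wtb_le[of b x1] l1 w_def by simp
  have len: "length Z1 = length Z2" "length Z1 = k + (k+1)*(2*t+1)"
    unfolding Z1_def Z2_def using l1 l2 by (simp_all add: pc_def)
  define f where "f c = k + (w*(2*t+1) + c)" for c
  have sub: "f ` {..<2*t+1} \<subseteq> {i. i < length Z1 \<and> Z1 ! i \<noteq> Z2 ! i}"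
  proof
    fix y assume "y \<in> f ` {..<2*t+1}"
    then obtain c where c: "c < 2*t+1" and y: "y = f c" by auto
    have idx: "w*(2*t+1) + c < (k+1)*(2*t+1)"
    proof -
      have "w*(2*t+1) + c < (w+1)*(2*t+1)" using c by simp
      also have "\<dots> \<le> (k+1)*(2*t+1)" using wk by (intro mult_right_mono) auto
      finally show ?thesis .
    qed
    have dv: "(w*(2*t+1) + c) div (2*t+1) = w" by (rule divaux[OF c])
    have A1: "f c < length Z1" using idx len unfolding f_def by simp
    have p1: "pc b t k x1 ! (w*(2*t+1)+c) = 1"
    proof -
      have "pc b t k x1 ! (w*(2*t+1)+c) = (if (w*(2*t+1)+c) div (2*t+1) = wtb b x1 then 1 else 0)" by (rule pc_nth[OF idx])
      then show ?thesis by (simp only: dv flip: w_def) simp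
    qed
    have p2: "pc b t k x2 ! (w*(2*t+1)+c) = 0"
    proof -
      have "pc b t k x2 ! (w*(2*t+1)+c) = (if (w*(2*t+1)+c) div (2*t+1) = wtb b x2 then 1 else 0)" by (rule pc_nth[OF idx])
      then show ?thesis using ne by (simp only: dv flip: w_def) simp
    qed
    have "Z1 ! f c = 1" unfolding Z1_def f_def using p1 nth_append_length_plus[of x1] l1 by simp
    moreover have "Z2 ! f c = 0" unfolding Z2_def f_def using p2 nth_append_length_plus[of x2] l2 by simp
    ultimately show "y \<in> {i. i < length Z1 \<and> Z1 ! i \<noteq> Z2 ! i}" using A1 y by simp
  qed
  have "inj_on f {..<2*t+1}" unfolding f_def by (auto simp: inj_on_def)
  then have "card (f ` {..<2*t+1}) = 2*t+1" by (simp add: card_image)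
  then have "2*t+1 \<le> card {i. i < length Z1 \<and> Z1 ! i \<noteq> Z2 ! i}"
    using sub by (metis card_mono finite_Collect_conjI finite_Collect_less_nat)
  also have "\<dots> \<le> db b Z1 Z2" by (rule hamming_le_db[OF len(1) b0])
  finally show "2*t+1 \<le> db b (x1 @ pc b t k x1) (x2 @ pc b t k x2)" unfolding Z1_def Z2_def .
qed

theorem mainTheorem17:
  fixes b k t :: nat
  assumes "0 < b" and "0 < t" and "t < k"
  shows "real (rb b (wtb b :: 'a::{finite,field} list \<Rightarrow> nat) k t)
    \<ge> 5 * real (card (UNIV :: 'a set)) ^ b * (real t - real b + 2) * (real t - real b + 1)
       / (3 * (real (card (UNIV :: 'a set)) ^ b - 1) * (real t - real b + 3))"
proof (cases "b \<le> t")
  case True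
  have ex: "\<exists>r p. fc_bsym_code b t (wtb b :: 'a list \<Rightarrow> nat) k r p"
    using exists_code[OF assms(1), of t k, where 'a='a] by blast
  then have "\<exists>p. fc_bsym_code b t (wtb b :: 'a list \<Rightarrow> nat) k (rb b (wtb b :: 'a list \<Rightarrow> nat) k t) p"
    unfolding rb_def by (rule LeastI_ex)
  then obtain p where "fc_bsym_code b t (wtb b :: 'a list \<Rightarrow> nat) k (rb b (wtb b :: 'a list \<Rightarrow> nat) k t) p" by blast
  from main_lower[OF this assms(1) True assms(3)] show ?thesis .
next
  case False
  define Q where "Q = real (card (UNIV :: 'a set)) ^ b"
  have c1: "1 \<le> card (UNIV::'a set)" by (simp add: Suc_le_eq card_gt_0_iff)
  have Q1: "Q \<ge> 1" unfolding Q_def using c1 by (simp add: one_le_power)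
  have num: "0 \<le> (real t - real b + 2) * (real t - real b + 1)"
  proof (cases "b = t + 1 \<or> b = t + 2")
    case True then show ?thesis by auto
  next
    case False
    then have "real t - real b + 2 \<le> 0" "real t - real b + 1 \<le> 0" using \<open>\<not> b \<le> t\<close> by auto
    then show ?thesis by (simp add: mult_nonpos_nonpos)
  qed
  have "5 * Q * (real t - real b + 2) * (real t - real b + 1) / (3 * (Q - 1) * (real t - real b + 3)) \<le> 0"
  proof (cases "b = t + 1 \<or> b = t + 2")
    case True then show ?thesis by auto
  next
    case False
    then have d: "real t - real b + 3 \<le> 0" using \<open>\<not> b \<le> t\<close> by auto
    have n: "0 \<le> 5 * Q * (real t - real b + 2) * (real t - real b + 1)"
      using num Q1 by (simp add: mult.assoc)
    have "3 * (Q - 1) * (real t - real b + 3) \<le> 0" using d Q1 by (simp add: mult_nonneg_nonpos)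
    then show ?thesis using n by (simp add: divide_nonneg_nonpos)
  qed
  then show ?thesis unfolding Q_def by (smt (verit) of_nat_0_le_iff)
qed

end
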